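(* Let $(\Omega,\mathcal F)$ be a measurable space with $\Sigma\neq\emptyset$ and $v_0:\mathcal F\to[0,\infty)$ a non-decreasing continuous set function with $v_0(\emptyset)=0$. Suppose $v_n:\mathcal F\to[0,\infty)$, $n=0,1,2,\dots$, is a sequence of continuous set functions satisfying $v_{n+1}(A)=\sup_{\mathcal I\in\Sigma}\mu_{v_n,\mathcal I}(A)$ for all $A\in\mathcal F$ and $n\ge0$. Then for each $A\in\mathcal F$ the sequence $v_n(A)$ is non-decreasing and bounded above by $v_0(\Omega)$, hence converges; and the limit $v(A)=\lim_n v_n(A)$ is non-decreasing, submodular, satisfies $v(\emptyset)=0$, $v(\Omega)=v_0(\Omega)$, and $\lim_n v(A_n)=v(\bigcup_n A_n)$ for every sequence $A_1\subset A_2\subset\cdots$ in $\mathcal F$.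
   Context: $\Sigma$ denotes the set of all classes $\mathcal I\subset\mathcal F$ that are chains (totally ordered by inclusion), contain $\emptyset$ and $\Omega$, and generate $\mathcal F$ as a $\sigma$-algebra. $v$ is non-decreasing if $v(A)\le v(B)$ for $A\subset B$; submodular if $v(A)+v(B)\ge v(A\cup B)+v(A\cap B)$. For $\mathcal I\in\Sigma$ let $\mathcal J$ be the algebra generated by $\mathcal I$, whose elements are the sets $\bigcup_{i=1}^n (C_i\cap D_i^c)$ with $C_1\supset D_1\supset\cdots\supset C_n\supset D_n$ in $\mathcal I$; for non-decreasing $v$ define $\mu_{v,\mathcal I}(\bigcup_{i=1}^n (C_i\cap D_i^c))=\sum_{i=1}^n(v(C_i)-v(D_i))$. A set function $v$ is continuous if it is non-decreasing and, for every $\mathcal I\in\Sigma$, $\mu_{v,\mathcal I}$ is $\sigma$-additive on $\mathcal J$; then $\mu_{v,\mathcal I}$ extends uniquely to a measure on $\mathcal F$, also denoted $\mu_{v,\mathcal I}$. *)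

theory Defs
  imports "HOL-Probability.Probability"
begin

definition chain_class :: "'a set \<Rightarrow> 'a set set \<Rightarrow> 'a set set set" where
  "chain_class \<Omega> F = {I. I \<subseteq> F \<and> (\<forall>C\<in>I. \<forall>D\<in>I. C \<subseteq> D \<or> D \<subseteq> C)
      \<and> {} \<in> I \<and> \<Omega> \<in> I \<and> sigma_sets \<Omega> I = F}"

definition chain_rep :: "'a set set \<Rightarrow> nat \<Rightarrow> (nat \<Rightarrow> 'a set) \<Rightarrow> (nat \<Rightarrow> 'a set) \<Rightarrow> bool" where
  "chain_rep I n C D \<longleftrightarrow> (\<forall>i<n. C i \<in> I \<and> D i \<in> I \<and> D i \<subseteq> C i)
      \<and> (\<forall>i. Suc i < n \<longrightarrow> C (Suc i) \<subseteq> D i)"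

definition gen_alg :: "'a set set \<Rightarrow> 'a set set" where
  "gen_alg I = {A. \<exists>n C D. chain_rep I n C D \<and> A = (\<Union>i<n. C i \<inter> - D i)}"

definition mu_J :: "('a set \<Rightarrow> real) \<Rightarrow> 'a set set \<Rightarrow> 'a set \<Rightarrow> real" where
  "mu_J v I A = (SOME r. \<exists>n C D. chain_rep I n C D \<and> A = (\<Union>i<n. C i \<inter> - D i)
                   \<and> r = (\<Sum>i<n. v (C i) - v (D i)))"

definition nondecreasing_on :: "'a set set \<Rightarrow> ('a set \<Rightarrow> real) \<Rightarrow> bool" where
  "nondecreasing_on F v \<longleftrightarrow> (\<forall>A\<in>F. \<forall>B\<in>F. A \<subseteq> B \<longrightarrow> v A \<le> v B)"

definition continuous_sf :: "'a set \<Rightarrow> 'a set set \<Rightarrow> ('a set \<Rightarrow> real) \<Rightarrow> bool" where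
  "continuous_sf \<Omega> F v \<longleftrightarrow> nondecreasing_on F v \<and>
     (\<forall>I\<in>chain_class \<Omega> F. \<forall>A :: nat \<Rightarrow> 'a set.
        range A \<subseteq> gen_alg I \<longrightarrow> disjoint_family A \<longrightarrow> (\<Union>(range A)) \<in> gen_alg I \<longrightarrow>
        (\<lambda>i. mu_J v I (A i)) sums mu_J v I (\<Union>(range A)))"

definition mu_ext :: "'a set \<Rightarrow> 'a set set \<Rightarrow> ('a set \<Rightarrow> real) \<Rightarrow> 'a set set \<Rightarrow> 'a set \<Rightarrow> real" where
  "mu_ext \<Omega> F v I A = measure (THE N. space N = \<Omega> \<and> sets N = F \<and>
      (\<forall>B\<in>gen_alg I. emeasure N B = ennreal (mu_J v I B))) A"

definition submodular_on :: "'a set set \<Rightarrow> ('a set \<Rightarrow> real) \<Rightarrow> bool" where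
  "submodular_on F v \<longleftrightarrow> (\<forall>A\<in>F. \<forall>B\<in>F. v A + v B \<ge> v (A \<union> B) + v (A \<inter> B))"

end

theory Submission
  imports Defs
begin

definition is_chain :: "'a set set \<Rightarrow> bool" where
  "is_chain I \<longleftrightarrow> (\<forall>C\<in>I. \<forall>D\<in>I. C \<subseteq> D \<or> D \<subseteq> C)"

lemma chain_rep_mono:
  assumes "chain_rep I n C D" "i < j" "j < n"
  shows "C j \<subseteq> D i"
  using assms(2,3)
proof (induction j)
  case 0 then show ?case by simp
next
  case (Suc j)
  have a: "C (Suc j) \<subseteq> D j" using assms(1) Suc.prems unfolding chain_rep_def by auto
  show ?case
  proof (cases "i = j")
    case True then show ?thesis using a by simp
  next
    case False
    then have "C j \<subseteq> D i" using Suc by auto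
    moreover have "D j \<subseteq> C j" using assms(1) Suc.prems unfolding chain_rep_def by auto
    ultimately show ?thesis using a by blast
  qed
qed

lemma chain_rep_shift:
  assumes "chain_rep I (Suc n) C D"
  shows "chain_rep I n (\<lambda>i. C (Suc i)) (\<lambda>i. D (Suc i))"
  using assms unfolding chain_rep_def by auto

lemma rep_sum:
  fixes v :: "'a set \<Rightarrow> real"
  assumes ch: "is_chain I"
  shows "chain_rep I n C D \<Longrightarrow> X \<in> I \<Longrightarrow> Y \<in> I \<Longrightarrow> Y \<subseteq> X \<Longrightarrow>
     X - Y = (\<Union>i<n. C i \<inter> - D i) \<Longrightarrow> (\<Sum>i<n. v (C i) - v (D i)) = v X - v Y"
proof (induction n arbitrary: C D X Y)
  case 0
  then have "X = Y" by auto
  then show ?case by simp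
next
  case (Suc n)
  define R where "R = (\<Union>i<n. C (Suc i) \<inter> - D (Suc i))"
  have rep': "chain_rep I n (\<lambda>i. C (Suc i)) (\<lambda>i. D (Suc i))"
    using chain_rep_shift[OF Suc.prems(1)] .
  have RD: "R \<subseteq> D 0"
  proof -
    have "C (Suc i) \<subseteq> D 0" if "i < n" for i
      using chain_rep_mono[OF Suc.prems(1), of 0 "Suc i"] that by simp
    then show ?thesis unfolding R_def by blast
  qed
  have un: "(\<Union>i<Suc n. C i \<inter> - D i) = (C 0 \<inter> - D 0) \<union> R"
    unfolding R_def by (auto simp: lessThan_Suc_eq_insert_0)
  have sm: "(\<Sum>i<Suc n. v (C i) - v (D i)) = (v (C 0) - v (D 0)) + (\<Sum>i<n. v (C (Suc i)) - v (D (Suc i)))"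
    by (rule sum.lessThan_Suc_shift)
  have C0: "C 0 \<in> I" "D 0 \<in> I" "D 0 \<subseteq> C 0" using Suc.prems(1) unfolding chain_rep_def by auto
  show ?case
  proof (cases "C 0 = D 0")
    case True
    then have "X - Y = R" using Suc.prems(5) un by auto
    then have "(\<Sum>i<n. v (C (Suc i)) - v (D (Suc i))) = v X - v Y"
      using Suc.IH[OF rep' Suc.prems(2,3,4)] R_def by simp
    then show ?thesis using sm True by simp
  next
    case False
    then have ne: "C 0 - D 0 \<noteq> {}" using C0 by blast
    have eq: "X - Y = (C 0 - D 0) \<union> R" using Suc.prems(5) un by auto
    have cmp: "\<And>P Q. P \<in> I \<Longrightarrow> Q \<in> I \<Longrightarrow> P \<subseteq> Q \<or> Q \<subseteq> P" using ch unfolding is_chain_def by blast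
    have "C 0 = X \<and> Y \<subseteq> D 0"
    proof -
      have c1: "C 0 \<subseteq> X \<or> X \<subseteq> C 0" using cmp C0 Suc.prems(2) by blast
      have c2: "D 0 \<subseteq> X \<or> X \<subseteq> D 0" using cmp C0 Suc.prems(2) by blast
      have c3: "D 0 \<subseteq> Y \<or> Y \<subseteq> D 0" using cmp C0 Suc.prems(3) by blast
      have c4: "C 0 \<subseteq> Y \<or> Y \<subseteq> C 0" using cmp C0 Suc.prems(3) by blast
      have AX: "C 0 - D 0 \<subseteq> X - Y" using eq by blast
      have XC: "X - Y \<subseteq> C 0" using eq RD C0(3) by blast
      have s1: "X \<subseteq> C 0"
      proof (rule ccontr)
        assume "\<not> X \<subseteq> C 0"
        then have "X - C 0 \<noteq> {}" by blast
        moreover have "X - C 0 \<subseteq> Y" using XC by blast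
        ultimately show False using c4 AX ne by blast
      qed
      have s2: "D 0 \<subseteq> X"
      proof (rule ccontr)
        assume "\<not> D 0 \<subseteq> X"
        then have "X \<subseteq> D 0" using c2 by blast
        then show False using AX ne by blast
      qed
      have s3: "C 0 = X" using s1 s2 AX by blast
      have s4: "Y \<subseteq> D 0"
      proof (rule ccontr)
        assume "\<not> Y \<subseteq> D 0"
        then have "D 0 \<subseteq> Y" using c3 by blast
        have "Y - D 0 \<subseteq> C 0 - D 0" using s3 Suc.prems(4) by blast
        then show False using AX \<open>\<not> Y \<subseteq> D 0\<close> by blast
      qed
      show ?thesis using s3 s4 by blast
    qed
    then have X: "C 0 = X" and YD: "Y \<subseteq> D 0" by auto
    have "R = D 0 - Y" using eq X YD RD C0(3) by blast
    then have "(\<Sum>i<n. v (C (Suc i)) - v (D (Suc i))) = v (D 0) - v Y"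
      using Suc.IH[OF rep' C0(2) Suc.prems(3) YD] R_def by simp
    then show ?thesis using sm X by simp
  qed
qed

lemma mu_J_interval:
  fixes v :: "'a set \<Rightarrow> real"
  assumes "is_chain I" "X \<in> I" "Y \<in> I" "Y \<subseteq> X"
  shows "mu_J v I (X - Y) = v X - v Y"
proof -
  let ?P = "\<lambda>r. \<exists>n C D. chain_rep I n C D \<and> X - Y = (\<Union>i<n. C i \<inter> - D i)
                   \<and> r = (\<Sum>i<n. v (C i) - v (D i))"
  have "?P (v X - v Y)"
    by (rule exI[of _ 1], rule exI[of _ "\<lambda>_. X"], rule exI[of _ "\<lambda>_. Y"])
       (use assms in \<open>auto simp: chain_rep_def\<close>)
  then have "?P (mu_J v I (X - Y))" unfolding mu_J_def by (rule someI_ex[of ?P, OF exI])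
  then obtain n C D where r: "chain_rep I n C D" "X - Y = (\<Union>i<n. C i \<inter> - D i)"
      "mu_J v I (X - Y) = (\<Sum>i<n. v (C i) - v (D i))" by blast
  show ?thesis using rep_sum[OF assms(1) r(1) assms(2,3,4) r(2)] r(3) by simp
qed


lemma chain_class_D:
  assumes "I \<in> chain_class \<Omega> F"
  shows "I \<subseteq> F" "is_chain I" "{} \<in> I" "\<Omega> \<in> I" "sigma_sets \<Omega> I = F"
  using assms unfolding chain_class_def is_chain_def by auto

lemma gen_alg_I: "is_chain I \<Longrightarrow> X \<in> I \<Longrightarrow> Y \<in> I \<Longrightarrow> Y \<subseteq> X \<Longrightarrow> X - Y \<in> gen_alg I"
  unfolding gen_alg_def
  by (rule CollectI, rule exI[of _ 1], rule exI[of _ "\<lambda>_. X"], rule exI[of _ "\<lambda>_. Y"])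
     (auto simp: chain_rep_def)

lemma chain_rep_disj:
  assumes "chain_rep I n C D"
  shows "disjoint_family_on (\<lambda>i. C i - D i) {..<n}"
proof -
  have "(C i - D i) \<inter> (C j - D j) = {}" if "i < j" "j < n" for i j
    using chain_rep_mono[OF assms that] by blast
  then show ?thesis unfolding disjoint_family_on_def
    by (metis Int_commute lessThan_iff linorder_neqE_nat)
qed

lemma M_memE:
  assumes "S \<in> {X - Y |X Y. X \<in> I \<and> Y \<in> I \<and> Y \<subseteq> X}"
  obtains X Y where "S = X - Y" "X \<in> I" "Y \<in> I" "Y \<subseteq> X"
proof -
  from assms obtain X Y where "S = X - Y \<and> X \<in> I \<and> Y \<in> I \<and> Y \<subseteq> X"
    unfolding mem_Collect_eq by (elim exE)
  then have "S = X - Y" "X \<in> I" "Y \<in> I" "Y \<subseteq> X" by simp_all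
  then show ?thesis by (rule that)
qed

lemma measure_exists:
  fixes v :: "'a set \<Rightarrow> real"
  assumes sa: "sigma_algebra \<Omega> F" and I: "I \<in> chain_class \<Omega> F" and cont: "continuous_sf \<Omega> F v"
  shows "\<exists>N. finite_measure N \<and> sets N = F \<and> space N = \<Omega> \<and> (\<forall>X\<in>I. measure N X = v X - v {})
     \<and> (\<forall>A. mu_ext \<Omega> F v I A = measure N A)"
proof -
  interpret sigma_algebra \<Omega> F by (rule sa)
  note ID = chain_class_D[OF I]
  have mono: "nondecreasing_on F v" and ca0: "\<And>A. range A \<subseteq> gen_alg I \<Longrightarrow> disjoint_family A \<Longrightarrow> (\<Union>(range A)) \<in> gen_alg I \<Longrightarrow>
        (\<lambda>i. mu_J v I (A i)) sums mu_J v I (\<Union>(range A))"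
    using cont I unfolding continuous_sf_def by auto
  have cmp: "\<And>P Q. P \<in> I \<Longrightarrow> Q \<in> I \<Longrightarrow> P \<subseteq> Q \<or> Q \<subseteq> P" using ID(2) unfolding is_chain_def by blast
  have IU: "P \<union> Q \<in> I" "P \<inter> Q \<in> I" if "P \<in> I" "Q \<in> I" for P Q
    using cmp[OF that] that by (auto simp: sup_absorb1 sup_absorb2 inf_absorb1 inf_absorb2)
  define M where "M = {X - Y | X Y. X \<in> I \<and> Y \<in> I \<and> Y \<subseteq> X}"
  have MF: "M \<subseteq> F" unfolding M_def using ID(1) by auto
  have IM: "I \<subseteq> M"
  proof
    fix X assume "X \<in> I"
    then show "X \<in> M" unfolding M_def using ID(3)
      by (intro CollectI exI[of _ X] exI[of _ "{}"]) auto
  qed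
  have Mg: "M \<subseteq> gen_alg I" unfolding M_def using gen_alg_I[OF ID(2)] by blast
  have Mv: "mu_J v I S = v X - v Y" if "S = X - Y" "X \<in> I" "Y \<in> I" "Y \<subseteq> X" for S X Y
    using mu_J_interval[OF ID(2) that(2,3,4)] that(1) by simp
  have Mnn: "0 \<le> mu_J v I S" if SM: "S \<in> M" for S
  proof -
    obtain X Y where xy: "S = X - Y" "X \<in> I" "Y \<in> I" "Y \<subseteq> X" using SM unfolding M_def by (rule M_memE)
    have "X \<in> F" "Y \<in> F" using ID(1) xy(2,3) by auto
    then have "v Y \<le> v X" using mono xy(4) unfolding nondecreasing_on_def by blast
    then show ?thesis using Mv[OF xy] by simp
  qed
  have semi: "semiring_of_sets \<Omega> M"
  proof
    show "M \<subseteq> Pow \<Omega>" using MF sets_into_space by blast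
    show "{} \<in> M" unfolding M_def using ID(3)
      by (intro CollectI exI[of _ "{}"]) auto
  next
    fix a b assume ab: "a \<in> M" "b \<in> M"
    obtain X1 Y1 where a: "a = X1 - Y1" "X1 \<in> I" "Y1 \<in> I" "Y1 \<subseteq> X1"
      using ab(1) unfolding M_def by (rule M_memE)
    obtain X2 Y2 where b: "b = X2 - Y2" "X2 \<in> I" "Y2 \<in> I" "Y2 \<subseteq> X2"
      using ab(2) unfolding M_def by (rule M_memE)
    have "a \<inter> b = (X1 \<inter> X2) - ((Y1 \<union> Y2) \<inter> (X1 \<inter> X2))" using a b by blast
    moreover have "(X1 \<inter> X2) \<in> I" by (rule IU(2)[OF a(2) b(2)])
    moreover have "(Y1 \<union> Y2) \<inter> (X1 \<inter> X2) \<in> I" by (rule IU(2)[OF IU(1)[OF a(3) b(3)] IU(2)[OF a(2) b(2)]])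
    ultimately show "a \<inter> b \<in> M" unfolding M_def
      by (intro CollectI exI[of _ "X1 \<inter> X2"] exI[of _ "(Y1 \<union> Y2) \<inter> (X1 \<inter> X2)"]) auto
    define P1 where "P1 = X1 - (Y1 \<union> X2) \<inter> X1"
    define P2 where "P2 = (X1 \<inter> Y2) - Y1 \<inter> (X1 \<inter> Y2)"
    have i1: "(Y1 \<union> X2) \<inter> X1 \<in> I" by (rule IU(2)[OF IU(1)[OF a(3) b(2)] a(2)])
    have i2: "X1 \<inter> Y2 \<in> I" by (rule IU(2)[OF a(2) b(3)])
    have i3: "Y1 \<inter> (X1 \<inter> Y2) \<in> I" by (rule IU(2)[OF a(3) i2])
    have P1: "P1 \<in> M" unfolding P1_def M_def
      by (intro CollectI exI[of _ X1] exI[of _ "(Y1 \<union> X2) \<inter> X1"]) (use i1 a(2) in auto)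
    have P2: "P2 \<in> M" unfolding P2_def M_def
      by (intro CollectI exI[of _ "X1 \<inter> Y2"] exI[of _ "Y1 \<inter> (X1 \<inter> Y2)"]) (use i2 i3 in auto)
    note P = P1 P2
    have "a - b = P1 \<union> P2" unfolding P1_def P2_def using a b by blast
    moreover have "P1 \<inter> P2 = {}" unfolding P1_def P2_def using b by blast
    ultimately show "\<exists>C\<subseteq>M. finite C \<and> disjoint C \<and> a - b = \<Union>C"
      using P by (intro exI[of _ "{P1, P2}"]) (auto simp: disjoint_def)
  qed
  define f where "f = (\<lambda>S. ennreal (mu_J v I S))"
  have pos: "positive M f" unfolding positive_def f_def using Mv[of "{}" "{}" "{}"] ID(3) by simp
  have ca: "countably_additive M f" unfolding countably_additive_def
  proof (intro allI impI)
    fix A :: "nat \<Rightarrow> 'a set" assume A: "range A \<subseteq> M" "disjoint_family A" "(\<Union>i. A i) \<in> M"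
    have s: "(\<lambda>i. mu_J v I (A i)) sums mu_J v I (\<Union>(range A))"
      using ca0[of A] A Mg by auto
    have "(\<Sum>i. f (A i)) = ennreal (\<Sum>i. mu_J v I (A i))"
      unfolding f_def using s Mnn A(1) by (intro suminf_ennreal2) (auto simp: sums_iff)
    also have "\<dots> = f (\<Union>i. A i)" unfolding f_def using s sums_unique by metis
    finally show "(\<Sum>i. f (A i)) = f (\<Union>i. A i)" .
  qed
  obtain mu' where mu': "\<forall>s\<in>M. mu' s = f s" "measure_space \<Omega> (sigma_sets \<Omega> M) mu'"
    using semiring_of_sets.caratheodory[OF semi pos ca] by blast
  have sM: "sigma_sets \<Omega> M = F"
  proof
    show "sigma_sets \<Omega> M \<subseteq> F" using sigma_sets_subset[OF MF] .
    show "F \<subseteq> sigma_sets \<Omega> M" using sigma_sets_mono'[OF IM, of \<Omega>] ID(5) by simp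
  qed
  define N where "N = measure_of \<Omega> F mu'"
  have sN: "sets N = F" and spN: "space N = \<Omega>" unfolding N_def by simp_all
  have eN: "emeasure N A = mu' A" if "A \<in> F" for A
    unfolding N_def using mu'(2) sM that
    by (intro emeasure_measure_of_sigma) (auto simp: measure_space_def)
  have eInt: "emeasure N (X - Y) = ennreal (v X - v Y)" if "X \<in> I" "Y \<in> I" "Y \<subseteq> X" for X Y
  proof -
    have "X - Y \<in> M" unfolding M_def using that
      by (intro CollectI exI[of _ X] exI[of _ Y]) auto
    then have "X - Y \<in> F" using MF by blast
    then have "emeasure N (X - Y) = mu' (X - Y)" by (rule eN)
    also have "\<dots> = f (X - Y)" using mu'(1) \<open>X - Y \<in> M\<close> by blast
    also have "\<dots> = ennreal (v X - v Y)" unfolding f_def using Mv[OF refl that] by simp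
    finally show ?thesis .
  qed
  have fin: "finite_measure N"
  proof
    show "emeasure N (space N) \<noteq> \<infinity>" using eInt[OF ID(4) ID(3)] spN by simp
  qed
  interpret N: finite_measure N by (rule fin)
  have PN: "space N = \<Omega> \<and> sets N = F \<and> (\<forall>B\<in>gen_alg I. emeasure N B = ennreal (mu_J v I B))"
  proof (intro conjI ballI)
    show "space N = \<Omega>" "sets N = F" by (fact spN, fact sN)
    fix B assume "B \<in> gen_alg I"
    let ?P = "\<lambda>r. \<exists>n C D. chain_rep I n C D \<and> B = (\<Union>i<n. C i \<inter> - D i)
                   \<and> r = (\<Sum>i<n. v (C i) - v (D i))"
    have "\<exists>r. ?P r" using \<open>B \<in> gen_alg I\<close> unfolding gen_alg_def by blast
    then have "?P (mu_J v I B)" unfolding mu_J_def by (rule someI_ex)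
    then obtain n C D where r: "chain_rep I n C D" "B = (\<Union>i<n. C i - D i)"
      "mu_J v I B = (\<Sum>i<n. v (C i) - v (D i))" by (auto simp: Diff_eq)
    have CD: "C i \<in> I" "D i \<in> I" "D i \<subseteq> C i" if "i < n" for i
      using r(1) that unfolding chain_rep_def by auto
    have "emeasure N B = (\<Sum>i<n. emeasure N (C i - D i))"
    proof -
      have "C i - D i \<in> sets N" if "i < n" for i
        using CD[OF that] ID(1) sN Diff by blast
      then show ?thesis unfolding r(2)
        by (intro sum_emeasure[symmetric] chain_rep_disj[OF r(1)]) auto
    qed
    also have "\<dots> = (\<Sum>i<n. ennreal (v (C i) - v (D i)))"
      using CD eInt by simp
    also have "\<dots> = ennreal (\<Sum>i<n. v (C i) - v (D i))"
    proof (intro sum_ennreal)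
      fix i assume "i \<in> {..<n}"
      then have "C i \<in> F" "D i \<in> F" "D i \<subseteq> C i" using CD ID(1) by auto
      then show "0 \<le> v (C i) - v (D i)" using mono unfolding nondecreasing_on_def by auto
    qed
    finally show "emeasure N B = ennreal (mu_J v I B)" using r(3) by simp
  qed
  have uniq: "N' = N" if "space N' = \<Omega> \<and> sets N' = F \<and> (\<forall>B\<in>gen_alg I. emeasure N' B = ennreal (mu_J v I B))" for N'
  proof (rule measure_eqI_generator_eq[where E=I and \<Omega>=\<Omega> and A="\<lambda>_. \<Omega>"])
    show "Int_stable I" unfolding Int_stable_def using IU by auto
    show "I \<subseteq> Pow \<Omega>" using ID(1) sets_into_space by blast
    fix X assume "X \<in> I"
    then have "X - {} \<in> gen_alg I" using gen_alg_I[OF ID(2) _ ID(3)] by blast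
    then show "emeasure N' X = emeasure N X" using that PN by simp
  next
    show "sets N' = sigma_sets \<Omega> I" "sets N = sigma_sets \<Omega> I" using that sN ID(5) by auto
    show "range (\<lambda>_. \<Omega>) \<subseteq> I" using ID(4) by auto
    show "(\<Union>i. \<Omega>) = \<Omega>" by simp
    have "\<Omega> - {} \<in> gen_alg I" using gen_alg_I[OF ID(2) ID(4) ID(3)] by blast
    then show "emeasure N' \<Omega> \<noteq> \<infinity>" for i using that by simp
  qed
  have THE: "(THE N. space N = \<Omega> \<and> sets N = F \<and> (\<forall>B\<in>gen_alg I. emeasure N B = ennreal (mu_J v I B))) = N"
    using PN uniq by (rule the_equality)
  have mv: "measure N X = v X - v {}" if "X \<in> I" for X
  proof -
    have "v {} \<le> v X" using mono ID(1,3) that unfolding nondecreasing_on_def by auto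
    then show ?thesis using eInt[OF that ID(3)] N.emeasure_eq_measure by simp
  qed
  show ?thesis
    using fin sN spN mv unfolding mu_ext_def THE by blast
qed


lemma chain_extend:
  assumes sa: "sigma_algebra \<Omega> F" and I0: "I0 \<in> chain_class \<Omega> F"
    and A: "range A \<subseteq> F" "incseq A"
  shows "\<exists>I\<in>chain_class \<Omega> F. range A \<subseteq> I \<and> (\<Union>i. A i) \<in> I"
proof -
  interpret sigma_algebra \<Omega> F by (rule sa)
  note ID = chain_class_D[OF I0]
  define A' where "A' n = (case n of 0 \<Rightarrow> {} | Suc m \<Rightarrow> A m)" for n
  define U where "U = (\<Union>i. A i)"
  define g where "g = (\<lambda>(n::nat, B). A' n \<union> (B \<inter> A n))"
  define I where "I = g ` (UNIV \<times> I0) \<union> (\<lambda>B. U \<union> B) ` I0"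
  have AF: "A n \<in> F" for n using A(1) by auto
  have A'F: "A' n \<in> F" for n using AF by (cases n) (auto simp: A'_def)
  have UF: "U \<in> F" unfolding U_def using AF by auto
  have A'A: "A' n \<subseteq> A n" for n using A(2) by (cases n) (auto simp: A'_def incseq_Suc_iff)
  have AA': "A n \<subseteq> A' m" if nm: "n < m" for n m
  proof -
    obtain k where m: "m = Suc k" "n \<le> k" using nm by (cases m) auto
    then show ?thesis using A(2) unfolding A'_def incseq_def by auto
  qed
  have AU: "A n \<subseteq> U" for n unfolding U_def by auto
  have gA: "g (n, B) \<subseteq> A n" for n B unfolding g_def using A'A by auto
  have cmp0: "\<And>P Q. P \<in> I0 \<Longrightarrow> Q \<in> I0 \<Longrightarrow> P \<subseteq> Q \<or> Q \<subseteq> P" using ID(2) unfolding is_chain_def by blast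
  have gmono: "g (n, B) \<subseteq> g (n, B')" if "B \<subseteq> B'" for n B B' unfolding g_def using that by auto
  have IF: "I \<subseteq> F"
  proof -
    have "g (n, B) \<in> F" if "B \<in> I0" for n B
    proof -
      have "B \<in> F" using that ID(1) by auto
      then show ?thesis unfolding g_def using A'F AF by (simp add: Un Int)
    qed
    moreover have "U \<union> B \<in> F" if "B \<in> I0" for B using that ID(1) UF by auto
    ultimately show ?thesis unfolding I_def by auto
  qed
  have chI: "is_chain I" unfolding is_chain_def
  proof (intro ballI)
    fix x y assume x: "x \<in> I" and y: "y \<in> I"
    show "x \<subseteq> y \<or> y \<subseteq> x"
    proof (cases "x \<in> g ` (UNIV \<times> I0)")
      case True
      then obtain n B where xB: "x = g (n, B)" "B \<in> I0" by auto
      show ?thesis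
      proof (cases "y \<in> g ` (UNIV \<times> I0)")
        case True
        then obtain m B' where yB: "y = g (m, B')" "B' \<in> I0" by auto
        consider "n < m" | "n = m" | "m < n" by linarith
        then show ?thesis
        proof cases
          case 1
          then have "x \<subseteq> y" unfolding xB yB using gA[of n B] AA'[OF 1] unfolding g_def by auto
          then show ?thesis ..
        next
          case 2
          then show ?thesis unfolding xB yB using cmp0[OF xB(2) yB(2)] gmono by metis
        next
          case 3
          then have "y \<subseteq> x" unfolding xB yB using gA[of m B'] AA'[OF 3] unfolding g_def by auto
          then show ?thesis ..
        qed
      next
        case False
        then obtain B' where "y = U \<union> B'" using y unfolding I_def by auto
        then have "x \<subseteq> y" unfolding xB using gA[of n B] AU[of n] by auto
        then show ?thesis ..
      qed
    next
      case False
      then obtain B where xB: "x = U \<union> B" "B \<in> I0" using x unfolding I_def by auto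
      show ?thesis
      proof (cases "y \<in> g ` (UNIV \<times> I0)")
        case True
        then obtain m B' where yB: "y = g (m, B')" by auto
        then have "y \<subseteq> x" unfolding xB using gA[of m B'] AU[of m] by auto
        then show ?thesis ..
      next
        case False
        then obtain B' where yB: "y = U \<union> B'" "B' \<in> I0" using y unfolding I_def by auto
        show ?thesis unfolding xB yB using cmp0[OF xB(2) yB(2)] by auto
      qed
    qed
  qed
  have gI: "g (n, B) \<in> I" if "B \<in> I0" for n B unfolding I_def using that by auto
  have UI: "U \<union> B \<in> I" if "B \<in> I0" for B unfolding I_def using that by auto
  have emptyI: "{} \<in> I" using gI[OF ID(3), of 0] by (simp add: g_def A'_def)
  have U\<Omega>: "U \<subseteq> \<Omega>" using UF sets_into_space by auto
  have OmegaI: "\<Omega> \<in> I" using UI[OF ID(4)] U\<Omega> by (simp add: sup_absorb2)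
  have AnI: "A n \<in> I" for n
  proof -
    have "g (n, \<Omega>) = A n" unfolding g_def using A'A[of n] AF[of n] sets_into_space by auto
    then show ?thesis using gI[OF ID(4), of n] by simp
  qed
  have UI': "U \<in> I" using UI[OF ID(3)] by simp
  have A'I: "A' n \<in> I" for n using emptyI AnI by (cases n) (auto simp: A'_def)
  interpret S: sigma_algebra \<Omega> "sigma_sets \<Omega> I"
    using IF sets_into_space by (intro sigma_algebra_sigma_sets) auto
  have I0S: "B \<in> sigma_sets \<Omega> I" if B: "B \<in> I0" for B
  proof -
    have eq: "B = (\<Union>n. g (n, B) - A' n) \<union> ((U \<union> B) - U)"
    proof (intro equalityI subsetI)
      fix x assume "x \<in> B"
      show "x \<in> (\<Union>n. g (n, B) - A' n) \<union> ((U \<union> B) - U)"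
      proof (cases "x \<in> U")
        case True
        then have ex: "\<exists>n. x \<in> A n" unfolding U_def by auto
        define k where "k = (LEAST n. x \<in> A n)"
        have xk: "x \<in> A k" unfolding k_def using LeastI_ex[OF ex] .
        have "x \<notin> A' k"
        proof (cases k)
          case (Suc m)
          have "x \<notin> A m" using not_less_Least[of m "\<lambda>n. x \<in> A n"] Suc unfolding k_def by auto
          then show ?thesis using Suc by (simp add: A'_def)
        qed (simp add: A'_def)
        then have "x \<in> g (k, B) - A' k" using xk \<open>x \<in> B\<close> unfolding g_def by auto
        then show ?thesis by blast
      next
        case False
        then show ?thesis using \<open>x \<in> B\<close> by auto
      qed
    next
      fix x assume "x \<in> (\<Union>n. g (n, B) - A' n) \<union> ((U \<union> B) - U)"
      then show "x \<in> B" unfolding g_def by auto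
    qed
    have "g (n, B) - A' n \<in> sigma_sets \<Omega> I" for n using gI[OF B] A'I by auto
    then have "(\<Union>n. g (n, B) - A' n) \<in> sigma_sets \<Omega> I" by auto
    moreover have "(U \<union> B) - U \<in> sigma_sets \<Omega> I" using UI[OF B] UI' by auto
    ultimately show ?thesis by (subst eq) auto
  qed
  have "sigma_sets \<Omega> I = F"
  proof
    show "sigma_sets \<Omega> I \<subseteq> F" using sigma_sets_subset[OF IF] .
    have "sigma_sets \<Omega> I0 \<subseteq> sigma_sets \<Omega> I" using I0S by (intro sigma_sets_mono) auto
    then show "F \<subseteq> sigma_sets \<Omega> I" using ID(5) by simp
  qed
  then have "I \<in> chain_class \<Omega> F"
    using IF chI emptyI OmegaI unfolding chain_class_def is_chain_def by auto
  then show ?thesis using AnI UI' unfolding U_def by auto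
qed


lemma measure_obtain:
  fixes v :: "'a set \<Rightarrow> real"
  assumes "sigma_algebra \<Omega> F" "I \<in> chain_class \<Omega> F" "continuous_sf \<Omega> F v"
  obtains N where "finite_measure N" "sets N = F" "space N = \<Omega>" "\<forall>X\<in>I. measure N X = v X - v {}"
    "\<forall>A. mu_ext \<Omega> F v I A = measure N A"
proof -
  from measure_exists[OF assms] obtain N where h: "finite_measure N \<and> sets N = F \<and> space N = \<Omega>
    \<and> (\<forall>X\<in>I. measure N X = v X - v {}) \<and> (\<forall>A. mu_ext \<Omega> F v I A = measure N A)"
    by (elim exE)
  from h have "finite_measure N" "sets N = F" "space N = \<Omega>" "\<forall>X\<in>I. measure N X = v X - v {}"
    "\<forall>A. mu_ext \<Omega> F v I A = measure N A" by simp_all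
  then show ?thesis by (rule that)
qed

theorem proposition20:
  fixes \<Omega> :: "'a set" and F :: "'a set set" and v :: "nat \<Rightarrow> 'a set \<Rightarrow> real"
  assumes "sigma_algebra \<Omega> F"
    and "chain_class \<Omega> F \<noteq> {}"
    and "nondecreasing_on F (v 0)"
    and "v 0 {} = 0"
    and "\<And>n A. A \<in> F \<Longrightarrow> 0 \<le> v n A"
    and "\<And>n. continuous_sf \<Omega> F (v n)"
    and "\<And>n A. A \<in> F \<Longrightarrow> v (Suc n) A = (SUP I\<in>chain_class \<Omega> F. mu_ext \<Omega> F (v n) I A)"
  shows "(\<forall>A\<in>F. incseq (\<lambda>n. v n A) \<and> (\<forall>n. v n A \<le> v 0 \<Omega>) \<and> convergent (\<lambda>n. v n A))
    \<and> nondecreasing_on F (\<lambda>A. lim (\<lambda>n. v n A))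
    \<and> submodular_on F (\<lambda>A. lim (\<lambda>n. v n A))
    \<and> lim (\<lambda>n. v n {}) = 0
    \<and> lim (\<lambda>n. v n \<Omega>) = v 0 \<Omega>
    \<and> (\<forall>A :: nat \<Rightarrow> 'a set. range A \<subseteq> F \<longrightarrow> incseq A \<longrightarrow>
         (\<lambda>n. lim (\<lambda>k. v k (A n))) \<longlonglongrightarrow> lim (\<lambda>k. v k (\<Union>(range A))))"
proof -
  note sa = assms(1)
  interpret sigma_algebra \<Omega> F by (rule sa)
  define S where "S = chain_class \<Omega> F"
  obtain I0 where I0: "I0 \<in> S" using assms(2) unfolding S_def by blast
  have Sne: "S \<noteq> {}" using I0 by blast
  have mono: "nondecreasing_on F (v n)" for n using assms(6)[of n] unfolding continuous_sf_def by blast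
  have monoD: "v n X \<le> v n Y" if "X \<in> F" "Y \<in> F" "X \<subseteq> Y" for n X Y
    using mono[of n] that unfolding nondecreasing_on_def by blast
  have SC: "I \<in> chain_class \<Omega> F" if "I \<in> S" for I using that unfolding S_def by simp
  note ME = measure_obtain[OF sa SC assms(6)]
  have vSuc: "v (Suc n) A = (SUP I\<in>S. mu_ext \<Omega> F (v n) I A)" if "A \<in> F" for n A
    using assms(7)[OF that] unfolding S_def by simp
  have mu_empty: "mu_ext \<Omega> F (v n) I {} = 0" if IS: "I \<in> S" for n I
  proof -
    obtain N where N: "finite_measure N" "\<forall>A. mu_ext \<Omega> F (v n) I A = measure N A"
      using ME[OF IS, of n] by metis
    then show ?thesis by simp
  qed
  have v_empty: "v n {} = 0" for n
  proof (cases n)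
    case 0 then show ?thesis using assms(4) by simp
  next
    case (Suc m)
    have "v (Suc m) {} = (SUP I\<in>S. mu_ext \<Omega> F (v m) I {})" using vSuc[of "{}" m] by simp
    also have "\<dots> = (SUP I\<in>S. (0::real))" using mu_empty by (intro SUP_cong) auto
    also have "\<dots> = 0" using Sne by simp
    finally show ?thesis using Suc by simp
  qed
  have muI: "mu_ext \<Omega> F (v n) I X = v n X" if IS: "I \<in> S" and "X \<in> I" for n I X
  proof -
    obtain N where N: "\<forall>X\<in>I. measure N X = v n X - v n {}" "\<forall>A. mu_ext \<Omega> F (v n) I A = measure N A"
      using ME[OF IS, of n] by metis
    then show ?thesis using that(2) v_empty[of n] by simp
  qed
  have OmegaS: "\<Omega> \<in> I" if "I \<in> S" for I using chain_class_D(4)[OF SC[OF that]] .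
  have mubd: "mu_ext \<Omega> F (v n) I A \<le> v n \<Omega>" if IS: "I \<in> S" and "A \<in> F" for n I A
  proof -
    obtain N where N: "finite_measure N" "sets N = F" "space N = \<Omega>" "\<forall>X\<in>I. measure N X = v n X - v n {}"
      "\<forall>A. mu_ext \<Omega> F (v n) I A = measure N A" by (rule ME[OF IS, of n])
    interpret N: finite_measure N by (rule N(1))
    have "measure N A \<le> measure N \<Omega>"
      using that(2) sets_into_space N(2) by (intro N.finite_measure_mono) auto
    then show ?thesis using N(4,5) OmegaS[OF that(1)] v_empty by simp
  qed
  have bdd: "bdd_above ((\<lambda>I. mu_ext \<Omega> F (v n) I A) ` S)" if "A \<in> F" for n A
    using mubd[OF _ that] by (intro bdd_aboveI) auto
  have upper: "mu_ext \<Omega> F (v n) I A \<le> v (Suc n) A" if "I \<in> S" "A \<in> F" for n I A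
    unfolding vSuc[OF that(2)] by (rule cSUP_upper[OF that(1) bdd[OF that(2)]])
  have vSuc_le: "v (Suc n) A \<le> v n \<Omega>" if "A \<in> F" for n A
    unfolding vSuc[OF that] using Sne mubd[OF _ that] by (intro cSUP_least) auto
  have vOmega: "v n \<Omega> = v 0 \<Omega>" for n
  proof (induction n)
    case (Suc n)
    have "v (Suc n) \<Omega> \<le> v n \<Omega>" using vSuc_le top by blast
    moreover have "v n \<Omega> \<le> v (Suc n) \<Omega>"
      using upper[OF I0 top, of n] muI[OF I0 OmegaS[OF I0], of n] by simp
    ultimately show ?case using Suc by simp
  qed simp
  have extC: "\<exists>I\<in>S. range B \<subseteq> I \<and> (\<Union>i. B i) \<in> I" if "range B \<subseteq> F" "incseq B" for B
    unfolding S_def by (rule chain_extend[OF sa SC[OF I0] that])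
  have inS: "\<exists>I\<in>S. X \<in> I" if XF: "X \<in> F" for X
  proof -
    obtain I where "I \<in> S" "range (\<lambda>_::nat. X) \<subseteq> I" using extC[of "\<lambda>_. X"] XF by (auto simp: incseq_def)
    then show ?thesis by auto
  qed
  have inc1: "v n X \<le> v (Suc n) X" if XF: "X \<in> F" for n X
  proof -
    obtain I where "I \<in> S" "X \<in> I" using inS[OF XF] by blast
    then show ?thesis using upper[OF _ that, of I n] muI by simp
  qed
  have incs: "incseq (\<lambda>n. v n X)" if "X \<in> F" for X using inc1[OF that] by (intro incseq_SucI)
  have bnd: "v n X \<le> v 0 \<Omega>" if "X \<in> F" for n X
    using monoD[OF that top sets_into_space[OF that], of n] vOmega[of n] by simp
  define L where "L X = lim (\<lambda>n. v n X)" for X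
  have LS: "(\<lambda>n. v n X) \<longlonglongrightarrow> L X" if XF: "X \<in> F" for X
  proof -
    obtain l where "(\<lambda>n. v n X) \<longlonglongrightarrow> l" using incseq_convergent[OF incs[OF XF], of "v 0 \<Omega>"] bnd[OF XF] by blast
    then show ?thesis unfolding L_def by (simp add: limI)
  qed
  have conv: "convergent (\<lambda>n. v n X)" if "X \<in> F" for X using LS[OF that] by (auto simp: convergent_def)
  have vleL: "v n X \<le> L X" if "X \<in> F" for n X by (rule incseq_le[OF incs[OF that] LS[OF that]])
  have Lmono: "L X \<le> L Y" if "X \<in> F" "Y \<in> F" "X \<subseteq> Y" for X Y
    using LS[OF that(1)] LS[OF that(2)] monoD[OF that] by (intro LIMSEQ_le) auto
  have P1: "\<forall>A\<in>F. incseq (\<lambda>n. v n A) \<and> (\<forall>n. v n A \<le> v 0 \<Omega>) \<and> convergent (\<lambda>n. v n A)"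
    using incs bnd conv by blast
  have P2: "nondecreasing_on F (\<lambda>A. lim (\<lambda>n. v n A))"
    using Lmono unfolding nondecreasing_on_def L_def by blast
  have P3: "submodular_on F (\<lambda>A. lim (\<lambda>n. v n A))"
    unfolding submodular_on_def
  proof (intro ballI)
    fix X Y assume X: "X \<in> F" and Y: "Y \<in> F"
    define B where "B n = (if n = 0 then X \<inter> Y else X \<union> Y)" for n :: nat
    have BF: "range B \<subseteq> F" unfolding B_def using X Y by auto
    have Binc: "incseq B" unfolding B_def incseq_def by auto
    obtain I where I: "I \<in> S" "range B \<subseteq> I" using extC[OF BF Binc] by blast
    have "B 0 \<in> I" "B 1 \<in> I" using I(2) by auto
    then have XYI: "X \<inter> Y \<in> I" "X \<union> Y \<in> I" unfolding B_def by simp_all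
    have ineq: "v n (X \<union> Y) + v n (X \<inter> Y) \<le> L X + L Y" for n
    proof -
      obtain N where N: "finite_measure N" "sets N = F" "space N = \<Omega>"
        "\<forall>A. mu_ext \<Omega> F (v n) I A = measure N A" using ME[OF I(1), of n] by metis
      interpret N: finite_measure N by (rule N(1))
      have m1: "measure N (X \<union> Y) = measure N X + measure N (Y - X)"
        using X Y N(2) by (intro N.finite_measure_Union') auto
      have m2: "measure N (Y - X) = measure N Y - measure N (Y \<inter> X)"
        using X Y N(2) by (intro N.finite_measure_Diff') auto
      have "v n (X \<union> Y) + v n (X \<inter> Y) = measure N X + measure N Y"
        using muI[OF I(1) XYI(1), of n] muI[OF I(1) XYI(2), of n] N(4) m1 m2
        by (simp add: Int_commute)
      also have "\<dots> = mu_ext \<Omega> F (v n) I X + mu_ext \<Omega> F (v n) I Y" using N(4) by simp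
      also have "\<dots> \<le> v (Suc n) X + v (Suc n) Y" using upper[OF I(1) X] upper[OF I(1) Y] by (rule add_mono)
      also have "\<dots> \<le> L X + L Y" using vleL[OF X] vleL[OF Y] by (rule add_mono)
      finally show ?thesis .
    qed
    have "(\<lambda>n. v n (X \<union> Y) + v n (X \<inter> Y)) \<longlonglongrightarrow> L (X \<union> Y) + L (X \<inter> Y)"
      using X Y by (intro tendsto_add LS) auto
    then have "L (X \<union> Y) + L (X \<inter> Y) \<le> L X + L Y"
      using ineq by (intro LIMSEQ_le_const2) auto
    then show "lim (\<lambda>n. v n X) + lim (\<lambda>n. v n Y) \<ge> lim (\<lambda>n. v n (X \<union> Y)) + lim (\<lambda>n. v n (X \<inter> Y))"
      unfolding L_def by simp
  qed
  have P4: "lim (\<lambda>n. v n {}) = 0" using v_empty by simp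
  have P5: "lim (\<lambda>n. v n \<Omega>) = v 0 \<Omega>"
  proof -
    have "(\<lambda>n. v n \<Omega>) = (\<lambda>n. v 0 \<Omega>)" by (rule ext, rule vOmega)
    then show ?thesis by (simp add: limI)
  qed
  have P6: "(\<lambda>n. lim (\<lambda>k. v k (A n))) \<longlonglongrightarrow> lim (\<lambda>k. v k (\<Union>(range A)))"
    if A: "range A \<subseteq> F" "incseq A" for A :: "nat \<Rightarrow> 'a set"
  proof -
    define U where "U = (\<Union>i. A i)"
    have AF: "A n \<in> F" for n using A(1) by auto
    have UF: "U \<in> F" unfolding U_def using AF by auto
    have AU: "A n \<subseteq> U" for n unfolding U_def by auto
    have Linc: "incseq (\<lambda>n. L (A n))"
      using A(2) AF by (intro incseq_SucI Lmono) (auto simp: incseq_Suc_iff)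
    obtain l where l: "(\<lambda>n. L (A n)) \<longlonglongrightarrow> l" "\<forall>i. L (A i) \<le> l"
      using incseq_convergent[OF Linc, of "L U"] Lmono[OF AF UF AU] by blast
    have "l \<le> L U" using l(1) Lmono[OF AF UF AU] by (intro LIMSEQ_le_const2) auto
    moreover have "L U \<le> l"
    proof -
      obtain I where I: "I \<in> S" "range A \<subseteq> I" "U \<in> I" using extC[OF A] unfolding U_def by blast
      have "v k U \<le> l" for k
      proof -
        obtain N where N: "finite_measure N" "sets N = F" "space N = \<Omega>"
          "\<forall>A. mu_ext \<Omega> F (v k) I A = measure N A" using ME[OF I(1), of k] by metis
        interpret N: finite_measure N by (rule N(1))
        have "(\<lambda>n. measure N (A n)) \<longlonglongrightarrow> measure N (\<Union>i. A i)"
          using A N(2) by (intro N.finite_Lim_measure_incseq) auto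
        moreover have "measure N (A n) = v k (A n)" for n
          using N(4) muI[OF I(1), of "A n" k] I(2) by auto
        moreover have "measure N (\<Union>i. A i) = v k U"
          using N(4) muI[OF I(1) I(3), of k] unfolding U_def by auto
        ultimately have "(\<lambda>n. v k (A n)) \<longlonglongrightarrow> v k U" by simp
        moreover have "v k (A n) \<le> l" for n using vleL[OF AF, of k n] l(2)[rule_format, of n] by simp
        ultimately show ?thesis by (intro LIMSEQ_le_const2) auto
      qed
      then show ?thesis using LS[OF UF] by (intro LIMSEQ_le_const2) auto
    qed
    ultimately have "l = L U" by simp
    then show ?thesis using l(1) unfolding L_def U_def by simp
  qed
  show ?thesis using P1 P2 P3 P4 P5 P6 by blast
qed

end
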